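(* Assume we are either in the $\delta$-algebraic setting or in the $\delta$-arithmetic setting, and let $n\geq 2$. Let $\beta:R^{\times}\times R^{n-1}\rightarrow R^{n-1}$ be a $\delta$-map, $\psi:R^{\times}\rightarrow\mathfrak{gl}_{n-1}(R)$ a $\delta$-homomorphism (a group homomorphism from the multiplicative group $R^{\times}$ to the additive group $\mathfrak{gl}_{n-1}(R)$ which is a $\delta$-map), and $\lambda\in R^{n-1}$ a row vector such that for all $(a_1,b_1),(a_2,b_2)\in R^{\times}\times R^{n-1}$, $$\beta(a_1a_2,b_1+a_1b_2)=\beta(a_1,b_1)+a_1\beta(a_2,b_2)+b_1\psi(a_2)+a_2^{-1}b_2\lambda^tb_1+a_2^{-1}b_1\lambda^tb_2+a_1^{-1}(a_2^{-1}-1)b_1\lambda^tb_1.$$ 1) In the $\delta$-arithmetic setting, $\psi=0$ and there exist $\mu\in R^{n-1}$ and $\nu\in\mathfrak{gl}_{n-1}(R)$ such that for all $a\in R^{\times}$, $b\in R^{n-1}$, $$\beta(a,b)=(1-a)\mu+a^{-1}b\lambda^tb+b\nu.$$ 2) In the $\delta$-algebraic setting, there exist $\mu\in R^{n-1}$ and $\nu,\eta\in\mathfrak{gl}_{n-1}(R)$ such that for all $a\in R^{\times}$, $b\in R^{n-1}$, $$\psi(a)=-(a^{-1}\delta a)\nu,\qquad \beta(a,b)=(1-a)\mu+a^{-1}b\lambda^tb+b\eta+a\,\delta(a^{-1}b)\,\nu.$$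
   Context: Elements of $R^{n-1}$ are row vectors ($1\times(n-1)$ matrices), $t$ denotes transpose, $\delta$ is applied componentwise to vectors. $\delta$-arithmetic setting: $p$ odd prime, $R$ the complete discrete valuation ring with maximal ideal $pR$ and residue field $\mathbb{F}_p^a$, $\phi$ the Frobenius lift on $R$, $\delta x=(\phi(x)-x^p)/p$; a $\delta$-map $R^{\times}\times R^{n-1}\to R^M$ (resp. $R^{\times}\to R^M$) is one of the form $(a,b)\mapsto F(a,b,\delta a,\delta b,\dots,\delta^m a,\delta^m b)$ with $F$ an $M$-tuple of restricted power series over $R$ ($p$-adically completed) in these variables and the inverse of the variable for $a$. $\delta$-algebraic setting: $R$ a $\delta$-closed (Kolchin's constrainedly closed) field of characteristic zero with derivation $\delta$; $\delta$-maps defined the same way with $F$ polynomial over $R$. *)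

theory Defs
  imports "HOL-Analysis.Analysis" "HOL-Computational_Algebra.Polynomial"
begin

definition uinv :: "'a::comm_ring_1 \<Rightarrow> 'a" where
  "uinv a = (THE b. a * b = 1)"

text \<open>The scalar x y^t of two row vectors.\<close>
definition vdot :: "'a::comm_ring_1 ^ 'm \<Rightarrow> 'a ^ 'm \<Rightarrow> 'a" where
  "vdot x y = (\<Sum>i\<in>UNIV. x $ i * y $ i)"

definition mon_eval :: "('v \<Rightarrow> nat) \<Rightarrow> ('v \<Rightarrow> 'a::comm_ring_1) \<Rightarrow> 'a" where
  "mon_eval e x = (\<Prod>v\<in>{v. e v \<noteq> 0}. x v ^ e v)"

datatype setting = Arith nat | Alg

text \<open>delta-arithmetic setting: R is a p-adically complete DVR with maximal ideal pR,
  residue field an algebraic closure of F_p, phi a Frobenius lift, p * delta x = phi x - x^p.\<close>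
definition delta_arith_setting :: "nat \<Rightarrow> ('a::idom \<Rightarrow> 'a) \<Rightarrow> bool" where
  "delta_arith_setting p \<delta> \<longleftrightarrow>
     prime p \<and> odd p \<and>
     (let P = (of_nat p :: 'a) in
       P \<noteq> 0 \<and> \<not> (P dvd 1) \<and>
       (\<forall>x. x \<noteq> 0 \<longrightarrow> (\<exists>u k. (u dvd 1) \<and> x = u * P ^ k)) \<and>
       (\<forall>x. (\<forall>k. P ^ k dvd x) \<longrightarrow> x = 0) \<and>
       (\<forall>s::nat \<Rightarrow> 'a. (\<forall>k. P ^ k dvd (s (Suc k) - s k)) \<longrightarrow>
            (\<exists>y. \<forall>k. P ^ k dvd (y - s k))) \<and>
       (\<forall>q::'a poly. degree q \<ge> 1 \<and> lead_coeff q = 1 \<longrightarrow> (\<exists>x. P dvd poly q x)) \<and>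
       (\<forall>x. \<exists>q::int poly. degree q \<ge> 1 \<and> lead_coeff q = 1 \<and>
            P dvd poly (map_poly of_int q) x) \<and>
       (\<exists>\<phi>::'a \<Rightarrow> 'a. \<phi> 1 = 1 \<and> (\<forall>x y. \<phi> (x + y) = \<phi> x + \<phi> y) \<and>
            (\<forall>x y. \<phi> (x * y) = \<phi> x * \<phi> y) \<and>
            (\<forall>x. P * \<delta> x = \<phi> x - x ^ p)))"

text \<open>Differential polynomials in one differential indeterminate y: variable i stands for
  delta^i y; a polynomial is a finitely supported coefficient function on exponent vectors.\<close>
definition dpoly :: "((nat \<Rightarrow> nat) \<Rightarrow> 'a::comm_ring_1) \<Rightarrow> bool" where
  "dpoly c \<longleftrightarrow> finite {e. c e \<noteq> 0} \<and> (\<forall>e. c e \<noteq> 0 \<longrightarrow> finite {i. e i \<noteq> 0})"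

definition dp_vars :: "((nat \<Rightarrow> nat) \<Rightarrow> 'a::comm_ring_1) \<Rightarrow> nat set" where
  "dp_vars c = {i. \<exists>e. c e \<noteq> 0 \<and> e i \<noteq> 0}"

definition dp_eval :: "('a \<Rightarrow> 'a) \<Rightarrow> ((nat \<Rightarrow> nat) \<Rightarrow> 'a::comm_ring_1) \<Rightarrow> 'a \<Rightarrow> 'a" where
  "dp_eval \<delta> c y = (\<Sum>e\<in>{e. c e \<noteq> 0}. c e * mon_eval e (\<lambda>i. (\<delta> ^^ i) y))"

text \<open>delta-algebraic setting: a differential field of characteristic zero which is
  delta-closed (stated via Blum's axioms for differentially closed fields).\<close>
definition delta_alg_setting :: "('a::idom \<Rightarrow> 'a) \<Rightarrow> bool" where
  "delta_alg_setting \<delta> \<longleftrightarrow>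
     (\<forall>x::'a. x \<noteq> 0 \<longrightarrow> (x dvd 1)) \<and>
     (\<forall>k::nat. of_nat (Suc k) \<noteq> (0::'a)) \<and>
     (\<forall>x y. \<delta> (x + y) = \<delta> x + \<delta> y) \<and>
     (\<forall>x y. \<delta> (x * y) = x * \<delta> y + y * \<delta> x) \<and>
     (\<forall>cf cg :: (nat \<Rightarrow> nat) \<Rightarrow> 'a.
        dpoly cf \<and> dpoly cg \<and> dp_vars cf \<noteq> {} \<and> (\<exists>e. cg e \<noteq> 0) \<and>
        (\<forall>i\<in>dp_vars cg. i < Max (dp_vars cf)) \<longrightarrow>
        (\<exists>y. dp_eval \<delta> cf y = 0 \<and> dp_eval \<delta> cg y \<noteq> 0))"

definition in_setting :: "setting \<Rightarrow> ('a::idom \<Rightarrow> 'a) \<Rightarrow> bool" where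
  "in_setting S \<delta> = (case S of Arith p \<Rightarrow> delta_arith_setting p \<delta> | Alg \<Rightarrow> delta_alg_setting \<delta>)"

text \<open>Coefficient functions: polynomials (algebraic setting) or restricted power series
  (arithmetic setting: coefficients tend to 0 p-adically).\<close>
definition admissible :: "setting \<Rightarrow> (('v \<Rightarrow> nat) \<Rightarrow> 'a::comm_ring_1) \<Rightarrow> bool" where
  "admissible S c = (case S of
      Alg \<Rightarrow> finite {e. c e \<noteq> 0}
    | Arith p \<Rightarrow> (\<forall>k. finite {e. \<not> (of_nat p ^ k dvd c e)}))"

text \<open>Evaluation: finite sum, resp. p-adic limit of the partial sums.\<close>
definition series_eval :: "setting \<Rightarrow> (('v \<Rightarrow> nat) \<Rightarrow> 'a::comm_ring_1) \<Rightarrow> ('v \<Rightarrow> 'a) \<Rightarrow> 'a" where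
  "series_eval S c x = (case S of
      Alg \<Rightarrow> (\<Sum>e\<in>{e. c e \<noteq> 0}. c e * mon_eval e x)
    | Arith p \<Rightarrow> (THE y. \<forall>k. of_nat p ^ k dvd
          (y - (\<Sum>e\<in>{e. \<not> (of_nat p ^ k dvd c e)}. c e * mon_eval e x))))"

text \<open>Variables for delta-maps on R^x times R^(n-1): a^(-1), delta^i a, delta^i b_j.\<close>
datatype 'm dvar = InvA | DA nat | DB nat 'm

fun dvar_ord :: "'m dvar \<Rightarrow> nat" where
  "dvar_ord InvA = 0" | "dvar_ord (DA i) = i" | "dvar_ord (DB i j) = i"

fun dassign :: "('a::comm_ring_1 \<Rightarrow> 'a) \<Rightarrow> 'a \<Rightarrow> 'a ^ 'm \<Rightarrow> 'm dvar \<Rightarrow> 'a" where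
  "dassign \<delta> a b InvA = uinv a"
| "dassign \<delta> a b (DA i) = (\<delta> ^^ i) a"
| "dassign \<delta> a b (DB i j) = (\<delta> ^^ i) (b $ j)"

definition delta_fun :: "setting \<Rightarrow> ('a::comm_ring_1 \<Rightarrow> 'a) \<Rightarrow> ('a \<Rightarrow> 'a ^ 'm \<Rightarrow> 'a) \<Rightarrow> bool" where
  "delta_fun S \<delta> f \<longleftrightarrow> (\<exists>(c :: ('m dvar \<Rightarrow> nat) \<Rightarrow> 'a) m. admissible S c \<and>
      (\<forall>e v. c e \<noteq> 0 \<and> e v \<noteq> 0 \<longrightarrow> dvar_ord v \<le> m) \<and>
      (\<forall>a b. (a dvd 1) \<longrightarrow> f a b = series_eval S c (dassign \<delta> a b)))"

text \<open>Variables for delta-maps on R^x: a^(-1), delta^i a.\<close>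
datatype avar = AInv | AD nat

fun avar_ord :: "avar \<Rightarrow> nat" where
  "avar_ord AInv = 0" | "avar_ord (AD i) = i"

fun aassign :: "('a::comm_ring_1 \<Rightarrow> 'a) \<Rightarrow> 'a \<Rightarrow> avar \<Rightarrow> 'a" where
  "aassign \<delta> a AInv = uinv a"
| "aassign \<delta> a (AD i) = (\<delta> ^^ i) a"

definition delta_fun1 :: "setting \<Rightarrow> ('a::comm_ring_1 \<Rightarrow> 'a) \<Rightarrow> ('a \<Rightarrow> 'a) \<Rightarrow> bool" where
  "delta_fun1 S \<delta> g \<longleftrightarrow> (\<exists>(c :: (avar \<Rightarrow> nat) \<Rightarrow> 'a) m. admissible S c \<and>
      (\<forall>e v. c e \<noteq> 0 \<and> e v \<noteq> 0 \<longrightarrow> avar_ord v \<le> m) \<and>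
      (\<forall>a. (a dvd 1) \<longrightarrow> g a = series_eval S c (aassign \<delta> a)))"

definition delta_map_vec :: "setting \<Rightarrow> ('a::comm_ring_1 \<Rightarrow> 'a) \<Rightarrow> ('a \<Rightarrow> 'a ^ 'm \<Rightarrow> 'a ^ 'm) \<Rightarrow> bool" where
  "delta_map_vec S \<delta> \<beta> \<longleftrightarrow> (\<forall>j. delta_fun S \<delta> (\<lambda>a b. \<beta> a b $ j))"

definition delta_map_mat :: "setting \<Rightarrow> ('a::comm_ring_1 \<Rightarrow> 'a) \<Rightarrow> ('a \<Rightarrow> 'a ^ 'm ^ 'm) \<Rightarrow> bool" where
  "delta_map_mat S \<delta> \<psi> \<longleftrightarrow> (\<forall>i j. delta_fun1 S \<delta> (\<lambda>a. \<psi> a $ i $ j))"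

definition delta_hom :: "setting \<Rightarrow> ('a::comm_ring_1 \<Rightarrow> 'a) \<Rightarrow> ('a \<Rightarrow> 'a ^ 'm ^ 'm) \<Rightarrow> bool" where
  "delta_hom S \<delta> \<psi> \<longleftrightarrow> delta_map_mat S \<delta> \<psi> \<and>
     (\<forall>a1 a2. (a1 dvd 1) \<and> (a2 dvd 1) \<longrightarrow> \<psi> (a1 * a2) = \<psi> a1 + \<psi> a2)"

end

theory Submission
  imports Defs
begin


lemma uinv_mult: assumes "(a::'a::idom) dvd 1" shows "a * uinv a = 1"
proof -
  obtain b where b: "1 = a * b" using assms by (auto simp: dvd_def)
  have "a \<noteq> 0" using b by auto
  have "(THE b. a * b = 1) = b"
  proof (rule the_equality)
    show "a * b = 1" using b by simp
  next
    fix c assume "a * c = 1" thus "c = b" using b \<open>a \<noteq> 0\<close> by (metis mult_left_cancel)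
  qed
  thus ?thesis using b unfolding uinv_def by simp
qed

lemma uinv_mult': "(a::'a::idom) dvd 1 \<Longrightarrow> uinv a * a = 1"
  using uinv_mult by (metis mult.commute)

lemma uinv_1[simp]: "uinv (1::'a::idom) = 1"
  using uinv_mult[of "1::'a"] by simp

lemma vdot_add: "vdot (x + y) l = vdot x l + vdot y l"
  unfolding vdot_def by (simp add: sum.distrib distrib_right)
lemma vdot_scale: "vdot (c *s x) l = c * vdot x l"
  unfolding vdot_def by (simp add: sum_distrib_left mult.assoc)
lemma vdot_0[simp]: "vdot 0 l = 0"
  unfolding vdot_def by simp

lemma vm_scale: "(c *s x) v* M = c *s (x v* (M::'a::comm_ring_1^'n^'m))"
  unfolding vector_matrix_mult_def by (vector sum_distrib_left mult.assoc)

lemma axis_vm: "(axis j 1 v* M) $ k = (M::'a::comm_ring_1^'n^'m) $ j $ k"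
proof -
  have "(\<Sum>i\<in>UNIV. (axis j 1 $ i) * M$i$k) = (\<Sum>i\<in>UNIV. if i = j then M$i$k else 0)"
    by (rule sum.cong) (auto simp: axis_def)
  thus ?thesis unfolding vector_matrix_mult_def by simp
qed



lemma reduce:
  fixes \<beta> :: "'a::idom \<Rightarrow> 'a ^ 'm \<Rightarrow> 'a ^ 'm" and \<psi> :: "'a \<Rightarrow> 'a ^ 'm ^ 'm" and lam :: "'a^'m"
  assumes hom: "\<And>a1 a2. a1 dvd 1 \<Longrightarrow> a2 dvd 1 \<Longrightarrow> \<psi> (a1*a2) = \<psi> a1 + \<psi> a2"
    and cocycle: "\<And>a1 a2 b1 b2. (a1 dvd 1) \<Longrightarrow> (a2 dvd 1) \<Longrightarrow>
        \<beta> (a1 * a2) (b1 + a1 *s b2) =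
          \<beta> a1 b1 + a1 *s \<beta> a2 b2 + b1 v* \<psi> a2
          + (uinv a2 * vdot b2 lam) *s b1
          + (uinv a2 * vdot b1 lam) *s b2
          + (uinv a1 * (uinv a2 - 1) * vdot b1 lam) *s b1"
    and two: "(2::'a) dvd 1"
    and gdef: "\<And>b. \<gamma> b = \<beta> 1 b - vdot b lam *s b"
  shows "\<psi> 1 = 0"
    and "\<gamma> (x + y) = \<gamma> x + \<gamma> y"
    and "\<exists>\<mu>. \<forall>a b. a dvd 1 \<longrightarrow> \<beta> a b = (1-a) *s \<mu> + (uinv a * vdot b lam) *s b + \<gamma> b + b v* \<psi> a"
    and "c dvd 1 \<Longrightarrow> \<gamma> (c *s b) = c *s \<gamma> b - c *s (b v* \<psi> c)"
proof -
  show p1: "\<psi> 1 = 0" using hom[of 1 1] by simp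
  show "\<gamma> (x + y) = \<gamma> x + \<gamma> y"
    using cocycle[of 1 1 x y] unfolding gdef
    by (simp add: p1 vec_eq_iff algebra_simps vdot_add)
  have F: "\<beta> (a1*a2) 0 = \<beta> a1 0 + a1 *s \<beta> a2 0" if "a1 dvd 1" "a2 dvd 1" for a1 a2
    using cocycle[OF that, of 0 0] by simp
  have m1: "(-1::'a) dvd 1" by simp
  define \<mu> where "\<mu> = uinv 2 *s \<beta> (-1) 0"
  have f: "\<beta> a 0 = (1-a) *s \<mu>" if a: "a dvd 1" for a
  proof -
    have "\<beta> a 0 + a *s \<beta> (-1) 0 = \<beta> (-1) 0 + (-1) *s \<beta> a 0"
      using F[OF a m1] F[OF m1 a] by (simp add: mult.commute)
    hence "2 *s \<beta> a 0 = (1 - a) *s \<beta> (-1) 0"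
      by (simp add: vec_eq_iff algebra_simps)
    hence "uinv 2 *s (2 *s \<beta> a 0) = uinv 2 *s ((1 - a) *s \<beta> (-1) 0)" by simp
    moreover have u2: "\<And>x::'a. 2 * (uinv 2 * x) = x" using uinv_mult[OF two]
      by (metis mult.assoc mult_1)
    ultimately show ?thesis unfolding \<mu>_def by (simp add: vec_eq_iff algebra_simps u2)
  qed
  have F4: "\<beta> a b = \<beta> 1 b + \<beta> a 0 + b v* \<psi> a + ((uinv a - 1) * vdot b lam) *s b" if a: "a dvd 1" for a b
    using cocycle[of 1 a b 0] a by simp
  show "\<exists>\<mu>. \<forall>a b. a dvd 1 \<longrightarrow> \<beta> a b = (1-a) *s \<mu> + (uinv a * vdot b lam) *s b + \<gamma> b + b v* \<psi> a"
  proof (intro exI allI impI)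
    fix a b assume a: "(a::'a) dvd 1"
    show "\<beta> a b = (1-a) *s \<mu> + (uinv a * vdot b lam) *s b + \<gamma> b + b v* \<psi> a"
      unfolding F4[OF a, of b] f[OF a] gdef by (simp add: vec_eq_iff algebra_simps)
  qed
  assume c: "c dvd 1"
  have e1: "\<beta> c (c *s b) = \<beta> c 0 + c *s \<beta> 1 b"
    using cocycle[OF c, of 1 0 b] p1 by simp
  have e2: "\<beta> c (c *s b) = \<beta> 1 (c *s b) + \<beta> c 0 + (c *s b) v* \<psi> c + ((uinv c - 1) * (c * vdot b lam)) *s (c *s b)"
    using F4[OF c, of "c *s b"] by (simp add: vdot_scale)
  have u: "uinv c * c = 1" using uinv_mult'[OF c] .
  have "\<beta> 1 (c *s b) = c *s \<beta> 1 b - c *s (b v* \<psi> c) - ((uinv c - 1) * (c * vdot b lam)) *s (c *s b)"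
    using e1 e2 by (simp add: vec_eq_iff vm_scale algebra_simps)
  hence "\<beta> 1 (c *s b) = c *s \<beta> 1 b - c *s (b v* \<psi> c) - (c * vdot b lam - c * c * vdot b lam) *s b"
    by (simp add: vec_eq_iff algebra_simps u) (metis (no_types, lifting) mult.assoc mult.left_commute u mult_1_right)
  thus "\<gamma> (c *s b) = c *s \<gamma> b - c *s (b v* \<psi> c)"
    unfolding gdef by (simp add: vec_eq_iff vdot_scale algebra_simps)
qed



lemma Hfacts:
  fixes \<gamma> :: "'a::idom ^ 'm \<Rightarrow> 'a ^ 'm" and \<psi> :: "'a \<Rightarrow> 'a ^ 'm ^ 'm"
  assumes gadd: "\<And>x y. \<gamma> (x + y) = \<gamma> x + \<gamma> y"
    and gsc: "\<And>c b. c dvd 1 \<Longrightarrow> \<gamma> (c *s b) = c *s \<gamma> b - c *s (b v* \<psi> c)"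
    and hdef: "\<And>x. h x = (x *s \<gamma> (axis j 1) - \<gamma> (x *s axis j 1)) $ k"
  shows "h (x + y) = h x + h y"
    and "c dvd 1 \<Longrightarrow> h c = c * \<psi> c $ j $ k"
    and "c dvd 1 \<Longrightarrow> h (c * y) = c * h y + y * h c"
proof -
  show "h (x + y) = h x + h y" unfolding hdef
    by (simp add: vector_sadd_rdistrib gadd algebra_simps)
  assume c: "c dvd 1"
  show "h c = c * \<psi> c $ j $ k" unfolding hdef
    using gsc[OF c, of "axis j 1"] by (simp add: axis_vm)
  have "\<gamma> ((c * y) *s axis j 1) = c *s \<gamma> (y *s axis j 1) - c *s ((y *s axis j 1) v* \<psi> c)"
    using gsc[OF c, of "y *s axis j 1"] by (simp add: vector_smult_assoc)
  hence A1: "\<gamma> ((c * y) *s axis j 1) $ k = c * \<gamma> (y *s axis j 1) $ k - c * y * \<psi> c $ j $ k"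
    by (simp add: axis_vm vm_scale)
  have A2: "\<gamma> (c *s axis j 1) $ k = c * \<gamma> (axis j 1) $ k - c * \<psi> c $ j $ k"
    using gsc[OF c, of "axis j 1"] by (simp add: axis_vm)
  show "h (c * y) = c * h y + y * h c" unfolding hdef
    by (simp add: A1 A2 algebra_simps)
qed

lemma gamma_sum:
  fixes \<gamma> :: "'a::idom ^ 'm \<Rightarrow> 'a ^ 'm"
  assumes gadd: "\<And>x y. \<gamma> (x + y) = \<gamma> x + \<gamma> y"
  shows "\<gamma> b = (\<Sum>j\<in>UNIV. \<gamma> (b$j *s axis j 1))"
proof -
  have g0: "\<gamma> 0 = 0" using gadd[of 0 0] by simp
  have "\<gamma> (sum f A) = (\<Sum>j\<in>A. \<gamma> (f j))" if "finite A" for f :: "'m \<Rightarrow> 'a^'m" and A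
    using that by induction (simp_all add: g0 gadd)
  from this[of UNIV "\<lambda>i. (b$i) *s axis i 1"] show ?thesis by (simp add: basis_expansion)
qed



lemma add_of_nat_mult:
  fixes h :: "'a::comm_ring_1 \<Rightarrow> 'a"
  assumes add: "\<And>x y. h (x + y) = h x + h y"
  shows "h (of_nat n * w) = of_nat n * h w"
proof -
  have h0: "h 0 = 0" using add[of 0 0] by simp
  show ?thesis by (induction n) (simp_all add: h0 add distrib_right)
qed

lemma arith_deriv_zero:
  fixes h :: "'a::idom \<Rightarrow> 'a" and \<delta> :: "'a \<Rightarrow> 'a"
  assumes set: "delta_arith_setting p \<delta>"
    and add: "\<And>x y. h (x + y) = h x + h y"
    and leib: "\<And>c y. c dvd 1 \<Longrightarrow> h (c * y) = c * h y + y * h c"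
  shows "h x = 0"
proof -
  define P where "P = (of_nat p :: 'a)"
  note S = set[unfolded delta_arith_setting_def Let_def]
  note R = S[THEN conjunct2, THEN conjunct2]
  have pr: "prime p" using S by (rule conjunct1)
  have Pnu: "\<not> P dvd 1" using R[THEN conjunct2, THEN conjunct1] unfolding P_def by simp
  have fact: "\<forall>x. x \<noteq> 0 \<longrightarrow> (\<exists>u k. (u dvd 1) \<and> x = u * P ^ k)"
    using R[THEN conjunct2, THEN conjunct2, THEN conjunct1] unfolding P_def by simp
  have sep: "\<forall>x. (\<forall>k. P ^ k dvd x) \<longrightarrow> x = 0"
    using R[THEN conjunct2, THEN conjunct2, THEN conjunct2, THEN conjunct1] unfolding P_def by simp
  have roots: "\<forall>q::'a poly. degree q \<ge> 1 \<and> lead_coeff q = 1 \<longrightarrow> (\<exists>x. P dvd poly q x)"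
    using R[THEN conjunct2, THEN conjunct2, THEN conjunct2, THEN conjunct2, THEN conjunct2, THEN conjunct1] unfolding P_def by simp
  have nu: "P dvd x" if "\<not> x dvd 1" for x :: 'a
  proof (cases "x = 0")
    case False
    then obtain u k where u: "u dvd 1" "x = u * P ^ k" using fact by blast
    with that have "k \<noteq> 0" by (cases k) auto
    then show ?thesis using u by (cases k) auto
  qed simp
  have nu1: "(x - 1) dvd 1" if "\<not> x dvd 1" for x :: 'a
  proof (rule ccontr)
    assume "\<not> (x - 1) dvd 1"
    hence "P dvd x - 1" using nu by blast
    moreover have "P dvd x" using nu that by blast
    ultimately have "P dvd x - (x - 1)" using dvd_diff by blast
    thus False using Pnu by simp
  qed
  have "h (1 * 1) = 1 * h 1 + 1 * h 1" using leib[of 1 1] by simp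
  hence "h 1 = h 1 + h 1" by (simp only: mult_1_left)
  hence h1: "h 1 = 0" by (metis add_cancel_right_right)
  have hdiff: "h (a - b) = h a - h b" for a b using add[of "a - b" b] by simp
  have hpow: "h (z ^ Suc n) = of_nat (Suc n) * z ^ n * h z" if z: "z dvd 1" for z n
  proof (induction n)
    case 0 then show ?case by simp
  next
    case (Suc n)
    have "h (z ^ Suc (Suc n)) = h (z * z ^ Suc n)" by simp
    also have "\<dots> = z * h (z ^ Suc n) + z ^ Suc n * h z" using leib[OF z] by simp
    finally show ?case using Suc by (simp add: algebra_simps)
  qed
  obtain p' where p': "p = Suc p'" using pr by (cases p) auto
  have main: "\<forall>x. P ^ k dvd h x" for k
  proof (induction k)
    case 0 then show ?case by simp
  next
    case (Suc k)
    have unit_case: "P ^ Suc k dvd h x" if x: "x dvd 1" for x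
    proof -
      define q where "q = monom (1::'a) p + [:-x:]"
      have dq: "degree q = p" unfolding q_def using pr
        by (simp add: degree_add_eq_left degree_monom_eq prime_gt_0_nat)
      have lq: "lead_coeff q = 1" unfolding dq unfolding q_def p' by simp
      have "degree q \<ge> 1" using dq p' by simp
      then obtain z where z: "P dvd poly q z" using roots lq by blast
      have pz: "poly q z = z ^ p - x" unfolding q_def by (simp add: poly_monom)
      then obtain w where w: "z ^ p - x = P * w" using z by (auto simp: dvd_def)
      have zu: "z dvd 1"
      proof (rule ccontr)
        assume "\<not> z dvd 1"
        hence "P dvd z" using nu by blast
        hence "P dvd z ^ p" using p' by simp
        hence "P dvd z ^ p - (z ^ p - x)" using z pz by (metis dvd_diff)
        thus False using x Pnu dvd_trans by auto
      qed
      have "x = z ^ p - P * w" using w by (simp add: algebra_simps)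
      hence "h x = h (z ^ p) - h (P * w)" using hdiff by simp
      also have "\<dots> = P * z ^ p' * h z - P * h w"
        using hpow[OF zu, of p'] add_of_nat_mult[of h p w, OF add] p' unfolding P_def by simp
      also have "\<dots> = P * (z ^ p' * h z - h w)" by (simp add: algebra_simps)
      finally have hx: "h x = P * (z ^ p' * h z - h w)" .
      have "P ^ k dvd z ^ p' * h z - h w" using Suc.IH by (simp add: dvd_diff)
      thus ?thesis unfolding hx by simp
    qed
    show ?case
    proof
      fix x
      show "P ^ Suc k dvd h x"
      proof (cases "x dvd 1")
        case True then show ?thesis using unit_case by blast
      next
        case False
        have "h x = h (x - 1) + h 1" using add[of "x - 1" 1] by simp
        then show ?thesis using unit_case[OF nu1[OF False]] h1 by simp
      qed
    qed
  qed
  show ?thesis using sep main by blast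
qed



lemma c1_mult: "coeff (p * q) 1 = coeff p 0 * coeff q 1 + coeff p 1 * coeff (q::'a::comm_ring_1 poly) 0"
  by (simp add: coeff_mult atMost_Suc)

lemma c1_mult': "coeff (p * q) (Suc 0) = coeff p 0 * coeff q (Suc 0) + coeff p (Suc 0) * coeff (q::'a::comm_ring_1 poly) 0"
  using c1_mult[of p q] by simp

lemma c1_power: "coeff (p ^ k) 1 = of_nat k * coeff p 0 ^ (k - 1) * coeff (p::'a::comm_ring_1 poly) 1"
proof (induction k)
  case (Suc k)
  show ?case
  proof (cases k)
    case 0 then show ?thesis by simp
  next
    case (Suc k')
    show ?thesis using Suc.IH Suc by (simp add: c1_mult' coeff_0_power coeff_mult_0 algebra_simps)
  qed
qed simp

lemma c0_prod: "coeff (\<Prod>i\<in>I. f i) 0 = (\<Prod>i\<in>I. coeff (f i) 0 :: 'a::comm_ring_1)"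
proof (cases "finite I")
  case True then show ?thesis by induction (simp_all add: coeff_mult_0)
qed simp

lemma c1_prod:
  assumes "finite I"
  shows "coeff (\<Prod>i\<in>I. f i) 1 = (\<Sum>i\<in>I. coeff (f i) 1 * (\<Prod>j\<in>I-{i}. coeff (f j) 0) :: 'a::comm_ring_1)"
  using assms
proof induction
  case (insert a I)
  have "coeff (\<Prod>i\<in>insert a I. f i) 1 = coeff (f a) 0 * coeff (\<Prod>i\<in>I. f i) 1 + coeff (f a) 1 * coeff (\<Prod>i\<in>I. f i) 0"
    using insert by (simp add: c1_mult c1_mult')
  also have "\<dots> = coeff (f a) 0 * (\<Sum>i\<in>I. coeff (f i) 1 * (\<Prod>j\<in>I-{i}. coeff (f j) 0)) + coeff (f a) 1 * (\<Prod>j\<in>I. coeff (f j) 0)"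
    using insert by (simp add: c0_prod)
  also have "\<dots> = (\<Sum>i\<in>insert a I. coeff (f i) 1 * (\<Prod>j\<in>insert a I-{i}. coeff (f j) 0))"
  proof -
    have "(\<Sum>i\<in>I. coeff (f i) 1 * (\<Prod>j\<in>insert a I-{i}. coeff (f j) 0)) = (\<Sum>i\<in>I. coeff (f a) 0 * (coeff (f i) 1 * (\<Prod>j\<in>I-{i}. coeff (f j) 0)))"
    proof (rule sum.cong)
      fix i assume i: "i \<in> I"
      have "insert a I - {i} = insert a (I - {i})" using i insert by auto
      thus "coeff (f i) 1 * (\<Prod>j\<in>insert a I-{i}. coeff (f j) 0) = coeff (f a) 0 * (coeff (f i) 1 * (\<Prod>j\<in>I-{i}. coeff (f j) 0))"
        using insert by (simp add: algebra_simps)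
    qed simp
    moreover have "insert a I - {a} = I" using insert by auto
    ultimately show ?thesis using insert by (simp add: sum_distrib_left add.commute)
  qed
  finally show ?case .
qed simp

lemma finite_subsingleton: "(\<And>a b. a \<in> B \<Longrightarrow> b \<in> B \<Longrightarrow> a = b) \<Longrightarrow> finite B"
  by (metis finite.simps insertI1 subset_singleton_iff is_singletonI' is_singleton_the_elem finite_insert)

lemma of_nat_inj_char0:
  assumes char: "\<forall>k::nat. of_nat (Suc k) \<noteq> (0::'a::idom)"
  shows "inj (of_nat :: nat \<Rightarrow> 'a)"
proof (rule injI)
  have *: "of_nat m \<noteq> (of_nat n :: 'a)" if "m < n" for m n
  proof
    assume "of_nat m = (of_nat n :: 'a)"
    moreover have "(of_nat n :: 'a) = of_nat m + of_nat (n - m)" using that by (simp flip: of_nat_add)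
    ultimately have "(of_nat (n - m) :: 'a) = 0" by simp
    moreover have "n - m = Suc (n - m - 1)" using that by simp
    ultimately show False using char by (metis)
  qed
  fix m n assume "(of_nat m :: 'a) = of_nat n"
  thus "m = n" using *[of m n] *[of n m] by (metis linorder_neqE_nat)
qed

lemma poly_zero_nat_roots:
  assumes char: "\<forall>k::nat. of_nat (Suc k) \<noteq> (0::'a::idom)"
    and fin: "finite B" and r: "\<And>n. n \<notin> B \<Longrightarrow> poly Q (of_nat n :: 'a) = 0"
  shows "Q = 0"
proof (rule ccontr)
  assume "Q \<noteq> 0"
  hence f: "finite {x. poly Q x = 0}" by (rule poly_roots_finite)
  have "of_nat ` (UNIV - B) \<subseteq> {x. poly Q x = 0}" using r by auto
  hence "finite (of_nat ` (UNIV - B) :: 'a set)" using f finite_subset by blast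
  hence "finite (UNIV - B)" using of_nat_inj_char0[OF char] finite_imageD inj_on_subset by blast
  hence "finite (UNIV :: nat set)" using fin by (metis Diff_infinite_finite)
  thus False by simp
qed

lemma monval:
  assumes "\<forall>v. e v \<noteq> 0 \<longrightarrow> avar_ord v \<le> m"
  shows "mon_eval e x = x AInv ^ e AInv * (\<Prod>i\<in>{..m}. x (AD i) ^ e (AD i))"
proof -
  define V where "V = insert AInv (AD ` {..m})"
  have sub: "{v. e v \<noteq> 0} \<subseteq> V"
  proof
    fix v assume "v \<in> {v. e v \<noteq> 0}"
    hence ev: "e v \<noteq> 0" by simp
    show "v \<in> V"
    proof (cases v)
      case (AD i)
      hence "i \<le> m" using assms ev by (metis avar_ord.simps(2))
      thus ?thesis using AD unfolding V_def by auto
    qed (simp add: V_def)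
  qed
  have "mon_eval e x = (\<Prod>v\<in>V. x v ^ e v)"
    unfolding mon_eval_def by (rule prod.mono_neutral_left) (use sub in \<open>auto simp: V_def\<close>)
  also have "\<dots> = x AInv ^ e AInv * (\<Prod>v\<in>AD ` {..m}. x v ^ e v)"
    unfolding V_def by (subst prod.insert) auto
  also have "(\<Prod>v\<in>AD ` {..m}. x v ^ e v) = (\<Prod>i\<in>{..m}. x (AD i) ^ e (AD i))"
    by (subst prod.reindex) (auto simp: inj_on_def)
  finally show ?thesis .
qed



lemma dfacts:
  fixes \<delta> :: "'a::comm_ring_1 \<Rightarrow> 'a"
  assumes dadd: "\<And>x y. \<delta> (x + y) = \<delta> x + \<delta> y"
    and dmul: "\<And>x y. \<delta> (x * y) = x * \<delta> y + y * \<delta> x"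
  shows "\<delta> 0 = 0" and "\<delta> 1 = 0" and "\<delta> (of_nat n) = 0" and "\<delta> (of_nat n * x) = of_nat n * \<delta> x"
    and "(\<delta>^^i) 0 = 0" and "(\<delta>^^i) (x + y) = (\<delta>^^i) x + (\<delta>^^i) y"
    and "(\<delta>^^i) (of_nat n * x) = of_nat n * (\<delta>^^i) x" and "(\<delta>^^Suc i) 1 = 0"
proof -
  show d0: "\<delta> 0 = 0" using dadd[of 0 0] by simp
  have "\<delta> (1 * 1) = 1 * \<delta> 1 + 1 * \<delta> 1" by (rule dmul)
  hence "\<delta> 1 = \<delta> 1 + \<delta> 1" by (simp only: mult_1_left)
  thus d1: "\<delta> 1 = 0" by (metis add_cancel_right_right)
  show dn: "\<delta> (of_nat n) = 0" for n by (induction n) (simp_all add: d0 d1 dadd)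
  show dnx: "\<delta> (of_nat n * x) = of_nat n * \<delta> x" for n x using dmul[of "of_nat n" x] dn by simp
  show i0: "(\<delta>^^i) 0 = 0" for i by (induction i) (simp_all add: d0)
  show "(\<delta>^^i) (x + y) = (\<delta>^^i) x + (\<delta>^^i) y" for i by (induction i) (simp_all add: dadd)
  show "(\<delta>^^i) (of_nat n * x) = of_nat n * (\<delta>^^i) x" for i by (induction i) (simp_all add: dnx)
  show "(\<delta>^^Suc i) 1 = 0" for i by (induction i) (simp_all add: d1 d0)
qed

lemma c1_power': "coeff (p ^ k) (Suc 0) = of_nat k * coeff p 0 ^ (k - 1) * coeff (p::'a::comm_ring_1 poly) (Suc 0)"
  using c1_power[of p k] by simp

lemma alg_linear:
  fixes h \<delta> :: "'a::idom \<Rightarrow> 'a" and cf :: "(avar \<Rightarrow> nat) \<Rightarrow> 'a"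
  assumes char: "\<forall>k::nat. of_nat (Suc k) \<noteq> (0::'a)"
    and field: "\<And>x::'a. x \<noteq> 0 \<Longrightarrow> x dvd 1"
    and dadd: "\<And>x y. \<delta> (x + y) = \<delta> x + \<delta> y"
    and dmul: "\<And>x y. \<delta> (x * y) = x * \<delta> y + y * \<delta> x"
    and hadd: "\<And>x y. h (x + y) = h x + h y" and h1: "h 1 = 0"
    and fin: "finite {e. cf e \<noteq> 0}"
    and bnd: "\<And>e v. cf e \<noteq> 0 \<Longrightarrow> e v \<noteq> 0 \<Longrightarrow> avar_ord v \<le> m"
    and rep: "\<And>c. c \<noteq> 0 \<Longrightarrow> h c = c * (\<Sum>e\<in>{e. cf e \<noteq> 0}. cf e * mon_eval e (aassign \<delta> c))"
  shows "\<exists>b. \<forall>s. h s = (\<Sum>i\<le>m. b i * (\<delta>^^i) s)"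
proof -
  note df = dfacts[OF dadd dmul]
  define E where "E = {e. cf e \<noteq> 0}"
  define N where "N = (\<Sum>e\<in>E. e AInv)"
  define I where "I = {1..m}"
  define k where "k e = N + 1 - e AInv + e (AD 0)" for e
  define c0 where "c0 e = (\<Prod>i\<in>I. (0::'a) ^ e (AD i))" for e
  define w where "w e i = of_nat (e (AD i)) * (0::'a) ^ (e (AD i) - 1) * (\<Prod>j\<in>I-{i}. (0::'a) ^ e (AD j))" for e i
  define b where "b i = (if i = 0 then \<Sum>e\<in>E. cf e * of_nat (k e) * c0 e else \<Sum>e\<in>E. cf e * w e i)" for i
  have finE: "finite E" using fin E_def by simp
  have NE: "e AInv \<le> N" if "e \<in> E" for e
    unfolding N_def by (rule member_le_sum) (use that finE in auto)
  have h0: "h 0 = 0" using hadd[of 0 0] by (metis add.right_neutral add_cancel_right_right)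
  have main: "h s = b 0 * s + (\<Sum>i\<in>I. b i * (\<delta>^^i) s)" for s
  proof (cases "s = 0")
    case True then show ?thesis using h0 df(5) by simp
  next
    case False
    define d where "d i = (\<delta>^^i) s" for i
    define A where "A e = [:1,s:]^(k e) * (\<Prod>i\<in>I. [:0, d i:]^(e (AD i)))" for e
    define Q where "Q = (\<Sum>e\<in>E. smult (cf e) (A e)) - [:1,s:]^N * [:0, h s:]"
    define B where "B = {n::nat. 1 + of_nat n * s = 0}"
    have finB: "finite B"
    proof (rule finite_subsingleton)
      fix n1 n2 assume "n1 \<in> B" "n2 \<in> B"
      hence "of_nat n1 * s = of_nat n2 * s" unfolding B_def by (metis add_left_cancel mem_Collect_eq)
      hence "(of_nat n1 :: 'a) = of_nat n2" using False by simp
      thus "n1 = n2" using of_nat_inj_char0[OF char] by (simp add: inj_eq)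
    qed
    have roots: "poly Q (of_nat n) = 0" if "n \<notin> B" for n
    proof -
      define u where "u = 1 + of_nat n * s"
      have u0: "u \<noteq> 0" using that unfolding B_def u_def by simp
      have uu: "u * uinv u = 1" using uinv_mult[OF field[OF u0]] .
      have hu: "h u = of_nat n * h s" unfolding u_def using hadd h1 add_of_nat_mult[of h n s, OF hadd] by simp
      have du: "(\<delta>^^i) u = of_nat n * d i" if iI: "i \<in> I" for i
      proof -
        have "i \<noteq> 0" using iI by (auto simp: I_def)
        then obtain i' where i': "i = Suc i'" by (cases i) auto
        show ?thesis unfolding u_def d_def i' by (simp only: df(6,7,8) add_0_left)
      qed
      have mon: "u ^ (N+1) * mon_eval e (aassign \<delta> u) = u ^ (k e) * (\<Prod>i\<in>I. (of_nat n * d i) ^ e (AD i))"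
        if eE: "e \<in> E" for e
      proof -
        have "mon_eval e (aassign \<delta> u) = uinv u ^ e AInv * (\<Prod>i\<in>{..m}. ((\<delta>^^i) u) ^ e (AD i))"
          using monval[of e m "aassign \<delta> u"] bnd eE unfolding E_def by simp
        also have "(\<Prod>i\<in>{..m}. ((\<delta>^^i) u) ^ e (AD i)) = u ^ e (AD 0) * (\<Prod>i\<in>I. (of_nat n * d i) ^ e (AD i))"
        proof -
          have "{..m} = insert 0 I" by (auto simp: I_def)
          hence "(\<Prod>i\<in>{..m}. ((\<delta>^^i) u) ^ e (AD i)) = u ^ e (AD 0) * (\<Prod>i\<in>I. ((\<delta>^^i) u) ^ e (AD i))"
            by (simp add: I_def)
          also have "(\<Prod>i\<in>I. ((\<delta>^^i) u) ^ e (AD i)) = (\<Prod>i\<in>I. (of_nat n * d i) ^ e (AD i))"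
            by (rule prod.cong) (simp_all add: du)
          finally show ?thesis .
        qed
        finally have me: "mon_eval e (aassign \<delta> u) = uinv u ^ e AInv * (u ^ e (AD 0) * (\<Prod>i\<in>I. (of_nat n * d i) ^ e (AD i)))" .
        have "u ^ (N+1) = u ^ (N + 1 - e AInv) * u ^ e AInv" using NE[OF eE] by (simp flip: power_add)
        moreover have "u ^ e AInv * uinv u ^ e AInv = 1" using uu by (simp flip: power_mult_distrib)
        moreover have "u ^ (k e) = u ^ (N + 1 - e AInv) * u ^ e (AD 0)" unfolding k_def by (simp add: power_add)
        ultimately show ?thesis unfolding me by (simp add: algebra_simps)
      qed
      have "u ^ N * h u = (\<Sum>e\<in>E. cf e * (u ^ (N+1) * mon_eval e (aassign \<delta> u)))"
        using rep[OF u0] unfolding E_def by (simp add: sum_distrib_left algebra_simps)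
      also have "\<dots> = (\<Sum>e\<in>E. cf e * (u ^ (k e) * (\<Prod>i\<in>I. (of_nat n * d i) ^ e (AD i))))"
        by (rule sum.cong[OF refl]) (simp only: mon)
      also have "\<dots> = poly (\<Sum>e\<in>E. smult (cf e) (A e)) (of_nat n)"
        by (simp add: poly_sum A_def poly_prod u_def algebra_simps)
      finally have l: "poly (\<Sum>e\<in>E. smult (cf e) (A e)) (of_nat n) = u ^ N * h u" ..
      have r: "poly ([:1,s:]^N * [:0, h s:]) (of_nat n) = u ^ N * (of_nat n * h s)"
        by (simp add: u_def algebra_simps)
      have "poly Q (of_nat n) = u ^ N * h u - u ^ N * (of_nat n * h s)"
        by (simp only: Q_def poly_diff l r)
      thus ?thesis using hu by simp
    qed
    have "Q = 0" by (rule poly_zero_nat_roots[OF char finB roots])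
    hence c: "coeff Q 1 = 0" by simp
    have cQ: "coeff Q 1 = (\<Sum>e\<in>E. cf e * coeff (A e) 1) - h s"
      unfolding Q_def by (simp add: coeff_sum c1_mult coeff_0_power)
    have cA: "coeff (A e) 1 = (\<Sum>i\<in>I. w e i * d i) + of_nat (k e) * s * c0 e" for e
    proof -
      have p1: "coeff (\<Prod>i\<in>I. [:0, d i:]^(e (AD i))) 1 = (\<Sum>i\<in>I. w e i * d i)"
        unfolding c1_prod[OF finite_atLeastAtMost[of 1 m, folded I_def]]
        by (rule sum.cong) (simp_all add: c1_power c1_power' coeff_0_power w_def algebra_simps)
      have p0: "coeff (\<Prod>i\<in>I. [:0, d i:]^(e (AD i))) 0 = c0 e"
        by (simp add: c0_prod coeff_0_power c0_def)
      show ?thesis unfolding A_def c1_mult p1 p0 by (simp add: coeff_0_power c1_power c1_power' algebra_simps)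
    qed
    have hs: "h s = (\<Sum>e\<in>E. cf e * ((\<Sum>i\<in>I. w e i * d i) + of_nat (k e) * s * c0 e))"
      using c cQ cA by simp
    also have "\<dots> = (\<Sum>e\<in>E. cf e * of_nat (k e) * c0 e) * s + (\<Sum>i\<in>I. (\<Sum>e\<in>E. cf e * w e i) * d i)"
      by (simp add: distrib_left sum.distrib sum_distrib_left sum_distrib_right sum.swap[of _ E I] algebra_simps)
    also have "(\<Sum>i\<in>I. (\<Sum>e\<in>E. cf e * w e i) * d i) = (\<Sum>i\<in>I. b i * (\<delta>^^i) s)"
      by (rule sum.cong) (auto simp: b_def d_def I_def)
    finally show ?thesis by (simp add: b_def)
  qed
  show ?thesis
  proof (intro exI allI)
    fix s
    have "{..m} = insert 0 I" by (auto simp: I_def)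
    hence "(\<Sum>i\<le>m. b i * (\<delta>^^i) s) = b 0 * s + (\<Sum>i\<in>I. b i * (\<delta>^^i) s)" by (simp add: I_def)
    thus "h s = (\<Sum>i\<le>m. b i * (\<delta>^^i) s)" using main by simp
  qed
qed



lemma alg_deriv_final:
  fixes h \<delta> :: "'a::idom \<Rightarrow> 'a"
  assumes char: "\<forall>k::nat. of_nat (Suc k) \<noteq> (0::'a)"
    and dadd: "\<And>x y. \<delta> (x + y) = \<delta> x + \<delta> y"
    and dmul: "\<And>x y. \<delta> (x * y) = x * \<delta> y + y * \<delta> x"
    and leib: "\<And>c y. c \<noteq> 0 \<Longrightarrow> h (c * y) = c * h y + y * h c"
    and lin: "\<And>s. h s = (\<Sum>i\<le>m. b i * (\<delta>^^i) s)"
    and ee: "\<delta> e = e" and e0: "e \<noteq> 0"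
  shows "\<exists>\<kappa>. \<forall>x. h x = \<kappa> * \<delta> x"
proof -
  note df = dfacts[OF dadd dmul]
  have dk: "\<delta> (e ^ k) = of_nat k * e ^ k" for k
  proof (induction k)
    case 0 show ?case using df(2) by simp
  next
    case (Suc k)
    have "\<delta> (e ^ Suc k) = e * \<delta> (e ^ k) + e ^ k * \<delta> e" by (simp add: dmul)
    thus ?case using Suc ee by (simp add: algebra_simps)
  qed
  have dik: "(\<delta>^^i) (e ^ k) = of_nat k ^ i * e ^ k" for i k
  proof (induction i)
    case (Suc i)
    have "(\<delta>^^Suc i) (e ^ k) = \<delta> (of_nat (k ^ i) * e ^ k)" using Suc by simp
    also have "\<dots> = of_nat (k ^ i) * (of_nat k * e ^ k)" using df(4)[of "k^i" "e^k"] dk[of k] by simp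
    finally show ?case by (simp add: algebra_simps)
  qed simp
  define S where "S k = (\<Sum>i\<le>m. b i * of_nat k ^ i)" for k
  have hk: "h (e ^ k) = S k * e ^ k" for k
    unfolding lin S_def dik sum_distrib_right by (rule sum.cong) (simp_all add: algebra_simps)
  have rec: "S (Suc k) = S k + S 1" for k
  proof -
    have "S (Suc k) * e ^ Suc k = h (e * e ^ k)" using hk[of "Suc k"] by simp
    also have "\<dots> = e * h (e ^ k) + e ^ k * h e" using leib e0 by simp
    also have "\<dots> = (S k + S 1) * e ^ Suc k" using hk[of k] hk[of 1] by (simp add: algebra_simps)
    finally show ?thesis using e0 by simp
  qed
  have S0: "S 0 = 0" using rec[of 0] by simp
  have z: "(\<Sum>i\<le>n. b i * 0 ^ i) = b 0" for n by (induction n) simp_all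
  have b0: "b 0 = 0" using S0 unfolding S_def by (simp add: z)
  have Sk: "S k = of_nat k * S 1" for k
  proof (induction k)
    case 0 show ?case using S0 by simp
  next
    case (Suc k)
    have "S (Suc k) = S k + S 1" by (rule rec)
    thus ?case using Suc by (simp add: algebra_simps)
  qed
  define Bp where "Bp = (\<Sum>i\<le>m. monom (b i) i) - [:0, S 1:]"
  have "Bp = 0"
  proof (rule poly_zero_nat_roots[OF char, of "{}"])
    fix k
    show "poly Bp (of_nat k) = 0" using Sk[of k] unfolding Bp_def S_def
      by (simp add: poly_sum poly_monom algebra_simps)
  qed simp
  have bi: "b i = 0" if "2 \<le> i" "i \<le> m" for i
  proof -
    have "coeff Bp i = 0" using \<open>Bp = 0\<close> by simp
    moreover have "coeff (\<Sum>i\<le>m. monom (b i) i) i = b i"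
      using that by (simp add: coeff_sum)
    moreover have "coeff [:0, S 1:] i = 0" using that
      by (cases i; cases "i - 1") auto
    ultimately show ?thesis unfolding Bp_def by simp
  qed
  show ?thesis
  proof (intro exI allI)
    fix x
    have "h x = (\<Sum>i\<le>m. if i = 1 then b 1 * \<delta> x else 0)"
      unfolding lin
    proof (rule sum.cong[OF refl])
      fix i assume "i \<in> {..m}"
      thus "b i * (\<delta>^^i) x = (if i = 1 then b 1 * \<delta> x else 0)"
        using b0 bi[of i] by (cases "i = 0"; cases "i = 1") auto
    qed
    also have "\<dots> = (if 1 \<le> m then b 1 else 0) * \<delta> x" by simp
    finally show "h x = (if 1 \<le> m then b 1 else 0) * \<delta> x" .
  qed
qed



lemma alg_exp:
  fixes \<delta> :: "'a::idom \<Rightarrow> 'a"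
  assumes "delta_alg_setting \<delta>"
  shows "\<exists>y. \<delta> y = y \<and> y \<noteq> 0"
proof -
  have blum: "\<forall>cf cg :: (nat \<Rightarrow> nat) \<Rightarrow> 'a.
        dpoly cf \<and> dpoly cg \<and> dp_vars cf \<noteq> {} \<and> (\<exists>e. cg e \<noteq> 0) \<and>
        (\<forall>i\<in>dp_vars cg. i < Max (dp_vars cf)) \<longrightarrow>
        (\<exists>y. dp_eval \<delta> cf y = 0 \<and> dp_eval \<delta> cg y \<noteq> 0)"
    using assms unfolding delta_alg_setting_def by blast
  define E0 :: "nat \<Rightarrow> nat" where "E0 = (\<lambda>i. if i = 0 then 1 else 0)"
  define E1 :: "nat \<Rightarrow> nat" where "E1 = (\<lambda>i. if i = 1 then 1 else 0)"
  have ne: "E1 \<noteq> E0" unfolding E0_def E1_def by (metis zero_neq_one)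
  define cf :: "(nat \<Rightarrow> nat) \<Rightarrow> 'a" where "cf = (\<lambda>e. if e = E1 then 1 else if e = E0 then -1 else 0)"
  define cg :: "(nat \<Rightarrow> nat) \<Rightarrow> 'a" where "cg = (\<lambda>e. if e = E0 then 1 else 0)"
  have sf: "{e. cf e \<noteq> 0} = {E1, E0}" unfolding cf_def using ne by auto
  have sg: "{e. cg e \<noteq> 0} = {E0}" unfolding cg_def by auto
  have s0: "{i. E0 i \<noteq> 0} = {0}" unfolding E0_def by auto
  have s1: "{i. E1 i \<noteq> 0} = {1}" unfolding E1_def by auto
  have vf: "dp_vars cf = {0, 1}" unfolding dp_vars_def
  proof -
    have cfe: "\<And>e. cf e \<noteq> 0 \<longleftrightarrow> e = E1 \<or> e = E0" unfolding cf_def using ne by auto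
    have "{i. \<exists>e. cf e \<noteq> 0 \<and> e i \<noteq> 0} = {i. E1 i \<noteq> 0 \<or> E0 i \<noteq> 0}" unfolding cfe by blast
    moreover have "{i. E1 i \<noteq> 0 \<or> E0 i \<noteq> 0} = {0, 1}" unfolding E0_def E1_def by (auto split: if_splits)
    ultimately show "{i. \<exists>e. cf e \<noteq> 0 \<and> e i \<noteq> 0} = {0, 1}" by simp
  qed
  have cfe: "\<And>e. cf e \<noteq> 0 \<longleftrightarrow> e = E1 \<or> e = E0" unfolding cf_def using ne by auto
  have cge: "\<And>e. cg e \<noteq> 0 \<longleftrightarrow> e = E0" unfolding cg_def by auto
  have vg: "dp_vars cg = {0}" unfolding dp_vars_def cge
  proof -
    have "{i. \<exists>e. e = E0 \<and> e i \<noteq> 0} = {i. E0 i \<noteq> 0}" by blast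
    thus "{i. \<exists>e. e = E0 \<and> e i \<noteq> 0} = {0}" using s0 by simp
  qed
  have "dpoly cf" unfolding dpoly_def
  proof (intro conjI allI impI)
    show "finite {e. cf e \<noteq> 0}" unfolding sf by simp
    fix e assume "cf e \<noteq> 0"
    hence "e = E1 \<or> e = E0" using cfe by blast
    thus "finite {i. e i \<noteq> 0}"
    proof
      assume "e = E1" thus ?thesis using s1 by simp
    next
      assume "e = E0" thus ?thesis using s0 by simp
    qed
  qed
  moreover have "dpoly cg" unfolding dpoly_def
  proof (intro conjI allI impI)
    show "finite {e. cg e \<noteq> 0}" unfolding sg by simp
    fix e assume "cg e \<noteq> 0"
    hence "e = E0" using cge by blast
    thus "finite {i. e i \<noteq> 0}" using s0 by simp
  qed
  moreover have "\<exists>e. cg e \<noteq> 0" using sg by auto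
  moreover have "dp_vars cf \<noteq> {}" unfolding vf by simp
  moreover have "\<forall>i\<in>dp_vars cg. i < Max (dp_vars cf)" unfolding vf vg by simp
  ultimately have "\<exists>y. dp_eval \<delta> cf y = 0 \<and> dp_eval \<delta> cg y \<noteq> 0"
    using blum by blast
  then obtain y where y: "dp_eval \<delta> cf y = 0" "dp_eval \<delta> cg y \<noteq> 0" by blast
  have m0: "mon_eval E0 x = x 0" for x :: "nat \<Rightarrow> 'a" unfolding mon_eval_def s0 by (simp add: E0_def)
  have m1: "mon_eval E1 x = x 1" for x :: "nat \<Rightarrow> 'a" unfolding mon_eval_def s1 by (simp add: E1_def)
  have c1: "cf E1 = 1" unfolding cf_def by simp
  have c0: "cf E0 = -1" unfolding cf_def using ne by simp
  have g0: "cg E0 = 1" unfolding cg_def by simp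
  have "dp_eval \<delta> cf y = cf E1 * mon_eval E1 (\<lambda>i. (\<delta>^^i) y) + cf E0 * mon_eval E0 (\<lambda>i. (\<delta>^^i) y)"
    unfolding dp_eval_def sf using ne by (simp only: sum.insert finite.emptyI finite_insert insert_iff empty_iff sum.empty simp_thms add_0_right)
  also have "\<dots> = \<delta> y - y" unfolding c1 c0 m0 m1 by simp
  finally have A: "dp_eval \<delta> cf y = \<delta> y - y" .
  have "dp_eval \<delta> cg y = cg E0 * mon_eval E0 (\<lambda>i. (\<delta>^^i) y)"
    unfolding dp_eval_def sg by simp
  also have "\<dots> = y" unfolding g0 m0 by simp
  finally have B: "dp_eval \<delta> cg y = y" .
  have "\<delta> y = y" using y(1) A by simp
  moreover have "y \<noteq> 0" using y(2) B by simp
  ultimately show ?thesis by blast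
qed



lemma two_unit_arith:
  fixes \<delta> :: "'a::idom \<Rightarrow> 'a"
  assumes set: "delta_arith_setting p \<delta>"
  shows "(2::'a) dvd 1"
proof -
  define P where "P = (of_nat p :: 'a)"
  note S = set[unfolded delta_arith_setting_def Let_def]
  note R = S[THEN conjunct2, THEN conjunct2]
  have od: "odd p" using S[THEN conjunct2, THEN conjunct1] .
  have Pnu: "\<not> P dvd 1" using R[THEN conjunct2, THEN conjunct1] unfolding P_def by simp
  have fact: "\<forall>x. x \<noteq> 0 \<longrightarrow> (\<exists>u k. (u dvd 1) \<and> x = u * P ^ k)"
    using R[THEN conjunct2, THEN conjunct2, THEN conjunct1] unfolding P_def by simp
  obtain q where q: "p = 2 * q + 1" using od oddE by blast
  have Pq: "P = 2 * of_nat q + 1" unfolding P_def q by simp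
  show ?thesis
  proof (cases "(2::'a) = 0")
    case True
    hence "P = 1" using Pq by simp
    thus ?thesis using Pnu by simp
  next
    case False
    then obtain u k where u: "u dvd 1" "(2::'a) = u * P ^ k" using fact by blast
    show ?thesis
    proof (cases k)
      case 0 then show ?thesis using u by simp
    next
      case (Suc k')
      hence "(2::'a) = P * (u * P ^ k')" using u by (simp add: algebra_simps)
      hence "P dvd 2" by (metis dvd_triv_left)
      hence "P dvd 2 * of_nat q" by (rule dvd_mult2)
      hence "P dvd P - 2 * of_nat q" by (simp add: dvd_diff)
      hence "P dvd 1" using Pq by simp
      thus ?thesis using Pnu by simp
    qed
  qed
qed

theorem lemma3p8:
  fixes S :: setting
    and \<delta> :: "'a::idom \<Rightarrow> 'a"
    and \<beta> :: "'a \<Rightarrow> 'a ^ 'm \<Rightarrow> 'a ^ 'm"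
    and \<psi> :: "'a \<Rightarrow> 'a ^ 'm ^ 'm"
    and lam :: "'a ^ 'm"
  assumes setting: "in_setting S \<delta>"
    and beta: "delta_map_vec S \<delta> \<beta>"
    and psi: "delta_hom S \<delta> \<psi>"
    and cocycle: "\<And>a1 a2 b1 b2. (a1 dvd 1) \<Longrightarrow> (a2 dvd 1) \<Longrightarrow>
        \<beta> (a1 * a2) (b1 + a1 *s b2) =
          \<beta> a1 b1 + a1 *s \<beta> a2 b2 + b1 v* \<psi> a2
          + (uinv a2 * vdot b2 lam) *s b1
          + (uinv a2 * vdot b1 lam) *s b2
          + (uinv a1 * (uinv a2 - 1) * vdot b1 lam) *s b1"
  shows "(\<forall>p. S = Arith p \<longrightarrow>
            (\<forall>a. (a dvd 1) \<longrightarrow> \<psi> a = 0) \<and>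
            (\<exists>\<mu> :: 'a ^ 'm. \<exists>\<nu> :: 'a ^ 'm ^ 'm. \<forall>a b. (a dvd 1) \<longrightarrow>
               \<beta> a b = (1 - a) *s \<mu> + (uinv a * vdot b lam) *s b + b v* \<nu>))
       \<and> (S = Alg \<longrightarrow>
            (\<exists>\<mu> :: 'a ^ 'm. \<exists>\<nu> \<eta> :: 'a ^ 'm ^ 'm. \<forall>a b. (a dvd 1) \<longrightarrow>
               \<psi> a = (\<chi> i j. - (uinv a * \<delta> a) * \<nu> $ i $ j) \<and>
               \<beta> a b = (1 - a) *s \<mu> + (uinv a * vdot b lam) *s b + b v* \<eta>
                        + a *s ((\<chi> j. \<delta> ((uinv a *s b) $ j)) v* \<nu>)))"
proof -
  have hom: "\<And>a1 a2. a1 dvd 1 \<Longrightarrow> a2 dvd 1 \<Longrightarrow> \<psi> (a1*a2) = \<psi> a1 + \<psi> a2"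
    using psi unfolding delta_hom_def by blast
  define \<gamma> where "\<gamma> b = \<beta> 1 b - vdot b lam *s b" for b
  define h where "h j k x = (x *s \<gamma> (axis j 1) - \<gamma> (x *s axis j 1)) $ k" for j k x
  have common: "(\<forall>x y. \<gamma> (x + y) = \<gamma> x + \<gamma> y) \<and>
      (\<exists>\<mu>. \<forall>a b. a dvd 1 \<longrightarrow> \<beta> a b = (1-a) *s \<mu> + (uinv a * vdot b lam) *s b + \<gamma> b + b v* \<psi> a) \<and>
      (\<forall>c b. c dvd 1 \<longrightarrow> \<gamma> (c *s b) = c *s \<gamma> b - c *s (b v* \<psi> c)) \<and> \<psi> 1 = 0"
    if two: "(2::'a) dvd 1"
  proof (intro conjI allI impI)
    note R = reduce[OF hom cocycle, of \<gamma>]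
    show "\<gamma> (x + y) = \<gamma> x + \<gamma> y" for x y by (rule R(2)) (assumption | rule two \<gamma>_def)+
    show "\<exists>\<mu>. \<forall>a b. a dvd 1 \<longrightarrow> \<beta> a b = (1-a) *s \<mu> + (uinv a * vdot b lam) *s b + \<gamma> b + b v* \<psi> a"
      by (rule R(3)) (assumption | rule two \<gamma>_def)+
    show "\<gamma> (c *s b) = c *s \<gamma> b - c *s (b v* \<psi> c)" if "c dvd 1" for c b
      by (rule R(4)) (assumption | rule two \<gamma>_def that)+
    show "\<psi> 1 = 0" by (rule R(1)) (assumption | rule two \<gamma>_def)+
  qed
  have hf: "h j k (x + y) = h j k x + h j k y"
      "c dvd 1 \<Longrightarrow> h j k c = c * \<psi> c $ j $ k"
      "c dvd 1 \<Longrightarrow> h j k (c * y) = c * h j k y + y * h j k c"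
    if gadd: "\<And>x y. \<gamma> (x + y) = \<gamma> x + \<gamma> y"
      and gsc: "\<And>c b. c dvd 1 \<Longrightarrow> \<gamma> (c *s b) = c *s \<gamma> b - c *s (b v* \<psi> c)" for j k x y c
    using Hfacts[of \<gamma> \<psi> "h j k" j k, OF gadd gsc h_def] by blast+
  have gcomp: "\<gamma> b $ k = (\<Sum>j\<in>UNIV. b $ j * \<gamma> (axis j 1) $ k - h j k (b $ j))"
    if gadd: "\<And>x y. \<gamma> (x + y) = \<gamma> x + \<gamma> y" for b k
    unfolding h_def gamma_sum[of \<gamma> b, OF gadd] by (simp add: sum_component)
  show ?thesis
  proof (intro conjI allI impI)
    fix p assume Sp: "S = Arith p"
    have set: "delta_arith_setting p \<delta>" using setting unfolding in_setting_def Sp setting.case .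
    note C = common[OF two_unit_arith[OF set]]
    have gadd: "\<And>x y. \<gamma> (x + y) = \<gamma> x + \<gamma> y" using C[THEN conjunct1] by blast
    have gsc: "\<And>c b. c dvd 1 \<Longrightarrow> \<gamma> (c *s b) = c *s \<gamma> b - c *s (b v* \<psi> c)"
      using C[THEN conjunct2, THEN conjunct2, THEN conjunct1] by blast
    obtain \<mu> where mu: "\<forall>a b. a dvd 1 \<longrightarrow> \<beta> a b = (1-a) *s \<mu> + (uinv a * vdot b lam) *s b + \<gamma> b + b v* \<psi> a"
      using C[THEN conjunct2, THEN conjunct1] by blast
    have h0: "h j k x = 0" for j k x
    proof (rule arith_deriv_zero[OF set, of "h j k"])
      show "h j k (x + y) = h j k x + h j k y" for x y by (rule hf(1)[OF gadd gsc])
      show "h j k (c * y) = c * h j k y + y * h j k c" if "c dvd 1" for c y by (rule hf(3)[OF gadd gsc that])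
    qed
    have psi0: "\<psi> a = 0" if a: "a dvd 1" for a
    proof -
      have "a \<noteq> 0" using a by auto
      moreover have "a * \<psi> a $ j $ k = 0" for j k using hf(2)[OF gadd gsc a, of j k] h0 by simp
      ultimately show ?thesis by (simp add: vec_eq_iff)
    qed
    show "\<psi> a = 0" if "a dvd 1" for a using psi0[OF that] .
    define \<nu> where "\<nu> = (\<chi> j. \<gamma> (axis j 1))"
    show "\<exists>\<mu> :: 'a ^ 'm. \<exists>\<nu> :: 'a ^ 'm ^ 'm. \<forall>a b. (a dvd 1) \<longrightarrow>
               \<beta> a b = (1 - a) *s \<mu> + (uinv a * vdot b lam) *s b + b v* \<nu>"
    proof (intro exI allI impI)
      fix a b assume a: "(a::'a) dvd 1"
      have "\<gamma> b $ k = (b v* \<nu>) $ k" for k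
      proof -
        have "\<gamma> b $ k = (\<Sum>j\<in>UNIV. b $ j * \<gamma> (axis j 1) $ k - h j k (b $ j))" by (rule gcomp[OF gadd])
        also have "\<dots> = (\<Sum>j\<in>UNIV. b $ j * \<gamma> (axis j 1) $ k)" by (simp add: h0)
        also have "\<dots> = (b v* \<nu>) $ k" by (simp add: vector_matrix_mult_def \<nu>_def)
        finally show ?thesis .
      qed
      hence "\<gamma> b = b v* \<nu>" by (simp add: vec_eq_iff)
      thus "\<beta> a b = (1 - a) *s \<mu> + (uinv a * vdot b lam) *s b + b v* \<nu>"
        using mu a psi0[OF a] by simp
    qed
  next
    assume SA: "S = Alg"
    have set: "delta_alg_setting \<delta>" using setting unfolding in_setting_def SA setting.case .
    note SS = set[unfolded delta_alg_setting_def]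
    have field: "\<And>x::'a. x \<noteq> 0 \<Longrightarrow> x dvd 1" using SS[THEN conjunct1] by blast
    have char: "\<forall>k::nat. of_nat (Suc k) \<noteq> (0::'a)" using SS[THEN conjunct2, THEN conjunct1] .
    have dadd: "\<And>x y. \<delta> (x + y) = \<delta> x + \<delta> y" using SS[THEN conjunct2, THEN conjunct2, THEN conjunct1] by blast
    have dmul: "\<And>x y. \<delta> (x * y) = x * \<delta> y + y * \<delta> x"
      using SS[THEN conjunct2, THEN conjunct2, THEN conjunct2, THEN conjunct1] by blast
    have unit_iff: "(x::'a) dvd 1 \<longleftrightarrow> x \<noteq> 0" for x using field by auto
    have "(2::'a) \<noteq> 0" using char[rule_format, of 1] by simp
    note C = common[OF field[OF this]]
    have gadd: "\<And>x y. \<gamma> (x + y) = \<gamma> x + \<gamma> y" using C[THEN conjunct1] by blast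
    have gsc: "\<And>c b. c dvd 1 \<Longrightarrow> \<gamma> (c *s b) = c *s \<gamma> b - c *s (b v* \<psi> c)"
      using C[THEN conjunct2, THEN conjunct2, THEN conjunct1] by blast
    have psi1: "\<psi> 1 = 0" using C[THEN conjunct2, THEN conjunct2, THEN conjunct2] .
    obtain \<mu> where mu: "\<forall>a b. a dvd 1 \<longrightarrow> \<beta> a b = (1-a) *s \<mu> + (uinv a * vdot b lam) *s b + \<gamma> b + b v* \<psi> a"
      using C[THEN conjunct2, THEN conjunct1] by blast
    obtain ex where ex: "\<delta> ex = ex" "ex \<noteq> 0" using alg_exp[OF set] by blast
    have hK: "\<exists>\<kappa>. \<forall>x. h j k x = \<kappa> * \<delta> x" for j k
    proof -
      have dm: "delta_map_mat S \<delta> \<psi>" using psi unfolding delta_hom_def by (rule conjunct1)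
      have "\<forall>i j. delta_fun1 S \<delta> (\<lambda>a. \<psi> a $ i $ j)" using dm unfolding delta_map_mat_def .
      hence "delta_fun1 S \<delta> (\<lambda>a. \<psi> a $ j $ k)" by (elim allE)
      hence fa: "\<exists>(c :: (avar \<Rightarrow> nat) \<Rightarrow> 'a) m. admissible Alg c \<and>
          (\<forall>e v. c e \<noteq> 0 \<and> e v \<noteq> 0 \<longrightarrow> avar_ord v \<le> m) \<and>
          (\<forall>a. (a dvd 1) \<longrightarrow> \<psi> a $ j $ k = series_eval Alg c (aassign \<delta> a))"
        unfolding delta_fun1_def SA .
      from fa obtain cf :: "(avar \<Rightarrow> nat) \<Rightarrow> 'a" and m where
        adm: "admissible Alg cf" and bnd: "\<forall>e v. cf e \<noteq> 0 \<and> e v \<noteq> 0 \<longrightarrow> avar_ord v \<le> m"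
        and rep: "\<forall>a. (a dvd 1) \<longrightarrow> \<psi> a $ j $ k = series_eval Alg cf (aassign \<delta> a)"
        by (elim exE conjE)
      have fin: "finite {e. cf e \<noteq> 0}" using adm unfolding admissible_def by simp
      have rep': "h j k c = c * (\<Sum>e\<in>{e. cf e \<noteq> 0}. cf e * mon_eval e (aassign \<delta> c))" if "c \<noteq> 0" for c
        using hf(2)[OF gadd gsc field[OF that], of j k] rep field[OF that] unfolding series_eval_def by simp
      have h1: "h j k 1 = 0" using hf(2)[OF gadd gsc, of 1 j k] psi1 by simp
      have bnd': "\<And>e v. cf e \<noteq> 0 \<Longrightarrow> e v \<noteq> 0 \<Longrightarrow> avar_ord v \<le> m" using bnd by blast
      obtain b where lin: "\<forall>s. h j k s = (\<Sum>i\<le>m. b i * (\<delta>^^i) s)"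
      proof -
        have "\<exists>b. \<forall>s. h j k s = (\<Sum>i\<le>m. b i * (\<delta>^^i) s)"
          by (rule alg_linear[where h="h j k" and m=m and cf=cf])
             (assumption | rule char field dadd dmul hf(1)[OF gadd gsc] h1 fin bnd' rep')+
        thus ?thesis using that by blast
      qed
      show ?thesis
      proof (rule alg_deriv_final[where h="h j k" and m=m and b=b, OF char dadd dmul _ _ ex])
        show "h j k (c * y) = c * h j k y + y * h j k c" if "c \<noteq> 0" for c y
          by (rule hf(3)[OF gadd gsc field[OF that]])
        show "h j k s = (\<Sum>i\<le>m. b i * (\<delta>^^i) s)" for s using lin by blast
      qed
    qed
    then obtain K where K: "\<And>j k x. h j k x = K j k * \<delta> x" by metis
    define \<nu> where "\<nu> = (\<chi> j k. - K j k)"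
    define \<eta> where "\<eta> = (\<chi> j. \<gamma> (axis j 1))"
    show "\<exists>\<mu> :: 'a ^ 'm. \<exists>\<nu> \<eta> :: 'a ^ 'm ^ 'm. \<forall>a b. (a dvd 1) \<longrightarrow>
               \<psi> a = (\<chi> i j. - (uinv a * \<delta> a) * \<nu> $ i $ j) \<and>
               \<beta> a b = (1 - a) *s \<mu> + (uinv a * vdot b lam) *s b + b v* \<eta>
                        + a *s ((\<chi> j. \<delta> ((uinv a *s b) $ j)) v* \<nu>)"
    proof (intro exI allI impI conjI)
      fix a b assume a: "(a::'a) dvd 1"
      have ua: "uinv a * a = 1" using uinv_mult'[OF a] .
      have pe: "\<psi> a $ j $ k = uinv a * \<delta> a * K j k" for j k
      proof -
        have eq: "a * \<psi> a $ j $ k = K j k * \<delta> a" using hf(2)[OF gadd gsc a, of j k] K[of j k a] by simp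
        have "\<psi> a $ j $ k = (uinv a * a) * \<psi> a $ j $ k" using ua by simp
        also have "\<dots> = uinv a * (a * \<psi> a $ j $ k)" by (simp only: mult.assoc)
        also have "\<dots> = uinv a * (K j k * \<delta> a)" by (simp only: eq)
        also have "\<dots> = uinv a * \<delta> a * K j k" by (simp only: ac_simps)
        finally show ?thesis .
      qed
      show "\<psi> a = (\<chi> i j. - (uinv a * \<delta> a) * \<nu> $ i $ j)"
        by (simp add: vec_eq_iff pe \<nu>_def)
      have d1: "\<delta> 1 = 0" using dfacts(2)[OF dadd dmul] .
      have du: "a * \<delta> (uinv a * y) = \<delta> y - uinv a * y * \<delta> a" for y
      proof -
        have "0 = \<delta> (uinv a * a)" using ua d1 by simp
        hence z: "uinv a * \<delta> a + a * \<delta> (uinv a) = 0" using dmul[of "uinv a" a] by simp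
        have "a * \<delta> (uinv a * y) = a * uinv a * \<delta> y + y * (a * \<delta> (uinv a))"
          using dmul[of "uinv a" y] by (simp add: algebra_simps)
        also have "a * \<delta> (uinv a) = - (uinv a * \<delta> a)" using z by (simp add: eq_neg_iff_add_eq_0 add.commute)
        finally show ?thesis using ua by (simp add: algebra_simps)
      qed
      have "\<gamma> b + b v* \<psi> a = b v* \<eta> + a *s ((\<chi> j. \<delta> ((uinv a *s b) $ j)) v* \<nu>)"
      proof (subst vec_eq_iff, intro allI)
        fix k
        have "(\<gamma> b + b v* \<psi> a) $ k = \<gamma> b $ k + (b v* \<psi> a) $ k" by simp
        also have "\<gamma> b $ k = (\<Sum>j\<in>UNIV. b $ j * \<gamma> (axis j 1) $ k - h j k (b $ j))" by (rule gcomp[OF gadd])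
        also have "(b v* \<psi> a) $ k = (\<Sum>j\<in>UNIV. b $ j * (uinv a * \<delta> a * K j k))"
          by (simp add: vector_matrix_mult_def pe)
        also have "(\<Sum>j\<in>UNIV. b $ j * \<gamma> (axis j 1) $ k - h j k (b $ j)) + (\<Sum>j\<in>UNIV. b $ j * (uinv a * \<delta> a * K j k))
            = (\<Sum>j\<in>UNIV. b $ j * \<gamma> (axis j 1) $ k - K j k * \<delta> (b $ j) + b $ j * (uinv a * \<delta> a * K j k))"
          by (simp add: K sum.distrib)
        also have "\<dots> = (\<Sum>j\<in>UNIV. b $ j * \<gamma> (axis j 1) $ k + a * (\<delta> (uinv a * b $ j) * - K j k))"
        proof (rule sum.cong[OF refl])
          fix j
          have "a * (\<delta> (uinv a * b $ j) * - K j k) = - K j k * (a * \<delta> (uinv a * b $ j))" by (simp add: algebra_simps)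
          also have "\<dots> = - K j k * (\<delta> (b $ j) - uinv a * b $ j * \<delta> a)" by (simp only: du)
          finally show "b $ j * \<gamma> (axis j 1) $ k - K j k * \<delta> (b $ j) + b $ j * (uinv a * \<delta> a * K j k) =
              b $ j * \<gamma> (axis j 1) $ k + a * (\<delta> (uinv a * b $ j) * - K j k)" by (simp add: algebra_simps)
        qed
        also have "\<dots> = (b v* \<eta> + a *s ((\<chi> j. \<delta> ((uinv a *s b) $ j)) v* \<nu>)) $ k"
          by (simp add: vector_matrix_mult_def \<eta>_def \<nu>_def sum.distrib sum_distrib_left sum_subtractf sum_negf)
        finally show "(\<gamma> b + b v* \<psi> a) $ k = (b v* \<eta> + a *s ((\<chi> j. \<delta> ((uinv a *s b) $ j)) v* \<nu>)) $ k" .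
      qed
      thus "\<beta> a b = (1 - a) *s \<mu> + (uinv a * vdot b lam) *s b + b v* \<eta>
                        + a *s ((\<chi> j. \<delta> ((uinv a *s b) $ j)) v* \<nu>)"
        using mu a by (simp add: add.assoc)
    qed
  qed
qed

end
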